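(* Let $\mathcal{S}\subseteq\{0,1\}^n$ be comonotone, let $\mathcal{P}=\{x\in\mathbb{R}^n: Mx\le b\}$ with $M\in\mathbb{R}^{m\times n}$, $b\in\mathbb{R}^m$, and let $\mathcal{X}=\mathcal{S}\cap\mathcal{P}$ satisfy $\operatorname{conv}(\mathcal{S}\cap\mathcal{P})=\operatorname{conv}(\mathcal{S})\cap\mathcal{P}$. Then for every $v\in\mathbb{R}^n$ there exists $\gamma\in\mathbb{R}^m_+$ such that, for all $\bar x$: $\bar x\in\arg\max_{x\in\mathcal{X}}v^\top x$ if and only if $$\bar x\in\mathcal{X}\cap\mathcal{P}_=(\gamma)\cap\arg\max_{x\in\mathcal{S}}(v-M^\top\gamma)^\top x,$$ where $\mathcal{P}_=(\gamma)=\{x\in\mathbb{R}^n: (Mx)_i=b_i\ \text{for all } i\in[m]\text{ with }\gamma_i\neq0\}$.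
   Context: $\Pi_n$ is the set of permutations of $[n]$; for $\pi\in\Pi_n$, $\mathcal{Z}(\pi)=\{x\in\mathbb{R}^n: x_{\pi(1)}\ge\cdots\ge x_{\pi(n)}\}$. A set $\mathcal{S}\subseteq\mathbb{R}^n$ is comonotone if there is a map $\Psi:\Pi_n\to\Pi_n$ such that for every $\pi\in\Pi_n$ and every $v\in\mathcal{Z}(\pi)$, whenever $\max_{x\in\mathcal{S}}v^\top x$ attains its optimum, it has an optimal solution in $\mathcal{Z}(\Psi(\pi))$. *)

theory Defs
  imports "HOL-Analysis.Analysis" "HOL-Combinatorics.Permutations"
begin

text \<open>Coordinates are indexed by a finite linearly ordered type 'n, standing for [n]
  with its natural order. Permutations of [n] are bijections p with p permutes UNIV.\<close>

definition Zcone :: "('n::{finite,linorder} \<Rightarrow> 'n) \<Rightarrow> (real^'n::{finite,linorder}) set" where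
  "Zcone p = {x. \<forall>i j. i \<le> j \<longrightarrow> x $ (p j) \<le> x $ (p i)}"

definition argmax_lin :: "real^'n \<Rightarrow> (real^'n) set \<Rightarrow> (real^'n) set" where
  "argmax_lin v A = {x \<in> A. \<forall>y \<in> A. v \<bullet> y \<le> v \<bullet> x}"

definition comonotone :: "(real^'n::{finite,linorder}) set \<Rightarrow> bool" where
  "comonotone S \<longleftrightarrow>
     (\<exists>Psi :: ('n \<Rightarrow> 'n) \<Rightarrow> ('n \<Rightarrow> 'n).
        (\<forall>p. p permutes (UNIV :: 'n set) \<longrightarrow> Psi p permutes (UNIV :: 'n set)) \<and>
        (\<forall>p v. p permutes (UNIV :: 'n set) \<longrightarrow> v \<in> Zcone p \<longrightarrow>
            argmax_lin v S \<noteq> {} \<longrightarrow> argmax_lin v S \<inter> Zcone (Psi p) \<noteq> {}))"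

definition polyh :: "real^'n^'m \<Rightarrow> real^'m \<Rightarrow> (real^'n) set" where
  "polyh M b = {x. \<forall>i. (M *v x) $ i \<le> b $ i}"

definition polyh_eq :: "real^'n^'m \<Rightarrow> real^'m \<Rightarrow> real^'m \<Rightarrow> (real^'n) set" where
  "polyh_eq M b \<gamma> = {x. \<forall>i. \<gamma> $ i \<noteq> 0 \<longrightarrow> (M *v x) $ i = b $ i}"

end

theory Submission
  imports Defs
begin

lemma finite_01:
  fixes S :: "(real^'n) set"
  assumes "\<forall>x\<in>S. \<forall>i. x $ i = 0 \<or> x $ i = 1"
  shows "finite S"
proof -
  have "S \<subseteq> range (\<lambda>f::'n \<Rightarrow> bool. \<chi> i. if f i then (1::real) else 0)"
  proof
    fix x assume "x \<in> S"
    then have "x = (\<chi> i. if x $ i = 1 then (1::real) else 0)"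
      using assms by (auto simp: vec_eq_iff)
    then show "x \<in> range (\<lambda>f::'n \<Rightarrow> bool. \<chi> i. if f i then (1::real) else 0)" by (intro image_eqI[of _ _ "\<lambda>i. x $ i = 1"]) auto
  qed
  then show ?thesis by (rule finite_subset) simp
qed

lemma sum_in_cone:
  assumes "convex_cone K" "finite I" "\<And>i. i \<in> I \<Longrightarrow> 0 \<le> c i" "\<And>i. i \<in> I \<Longrightarrow> w i \<in> K"
  shows "(\<Sum>i\<in>I. c i *\<^sub>R w i) \<in> K"
  using assms(2-4)
proof (induction I rule: finite_induct)
  case empty then show ?case using assms(1) by (simp add: convex_cone_contains_0)
next
  case (insert j I)
  then show ?case using assms(1) by (simp add: convex_cone_add convex_cone_scaleR)
qed

lemma duality:
  fixes S :: "(real^'n) set" and M :: "real^'n^'m" and b :: "real^'m" and v :: "real^'n"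
  assumes finS: "finite S" and xs: "xs \<in> S \<inter> polyh M b"
    and opt: "\<forall>y\<in>S \<inter> polyh M b. v \<bullet> y \<le> v \<bullet> xs"
    and hull: "convex hull (S \<inter> polyh M b) = convex hull S \<inter> polyh M b"
  shows "\<exists>\<gamma>::real^'m. (\<forall>i. 0 \<le> \<gamma> $ i) \<and> (\<forall>y\<in>S. v \<bullet> y - \<gamma> \<bullet> (M *v y) \<le> v \<bullet> xs - \<gamma> \<bullet> b)"
proof -
  define opt where "opt = v \<bullet> xs"
  define G :: "((real^'m) \<times> real \<times> real) set" where
    "G = (\<lambda>s. (M *v s, v \<bullet> s, 1)) ` S \<union> (\<lambda>i. (axis i 1, 0, 0)) ` UNIV"
  define K where "K = convex_cone hull G"
  define p where "p t = (b, t, 1::real)" for t :: real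
  have finG: "finite G" unfolding G_def using finS by simp
  have ccK: "convex_cone K" unfolding K_def by (rule convex_cone_convex_cone_hull)
  have GK: "G \<subseteq> K" unfolding K_def by (rule hull_subset)
  have polyK: "polyhedron K" unfolding K_def using finG by (rule polyhedron_convex_cone_hull)
  have pK: "p opt \<in> K"
  proof -
    have 1: "(M *v xs, v \<bullet> xs, 1) \<in> K" using GK xs unfolding G_def by auto
    have 2: "(\<Sum>i\<in>UNIV. (b - M *v xs) $ i *\<^sub>R (axis i 1, 0::real, 0::real)) \<in> K"
      apply (rule sum_in_cone[OF ccK])
      using xs GK unfolding G_def polyh_def by auto
    have 3: "(\<Sum>i\<in>UNIV. (b - M *v xs) $ i *\<^sub>R (axis i 1, 0::real, 0::real)) = (b - M *v xs, 0, 0)"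
    proof -
      have "(\<Sum>i\<in>UNIV. (b - M *v xs) $ i *\<^sub>R (axis i (1::real), 0::real, 0::real))
          = ((\<Sum>i\<in>UNIV. (b - M *v xs) $ i *\<^sub>R axis i (1::real)), 0, 0)"
        by (simp add: prod_eq_iff fst_sum snd_sum)
      also have "(\<Sum>i\<in>UNIV. (b - M *v xs) $ i *\<^sub>R axis i (1::real)) = b - M *v xs"
        using basis_expansion[of "b - M *v xs"] by (simp add: scalar_mult_eq_scaleR)
      finally show ?thesis .
    qed
    have "(M *v xs, v \<bullet> xs, 1) + (b - M *v xs, 0, 0) \<in> K"
      using convex_cone_add[OF ccK 1 2[unfolded 3]] .
    then show ?thesis by (simp add: p_def opt_def)
  qed
  define Q :: "((real^'m) \<times> real \<times> real) set" where
    "Q = {(y,t,r). 0 \<le> r \<and> (\<exists>x\<in>convex hull S. (\<forall>i. r * (M *v x) $ i \<le> y $ i) \<and> t \<le> r * (v \<bullet> x))}"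
  have xsS: "xs \<in> convex hull S" using xs by (auto intro: hull_inc)
  have ccQ: "convex_cone Q"
    unfolding convex_cone_iff
  proof (intro conjI ballI allI impI)
    show "0 \<in> Q" unfolding Q_def using xsS by (auto simp: zero_prod_def)
  next
    fix z w assume "z \<in> Q" "w \<in> Q"
    then obtain y1 t1 r1 x1 y2 t2 r2 x2 where z: "z = (y1,t1,r1)" and w: "w = (y2,t2,r2)"
      and r1: "0 \<le> r1" and x1: "x1 \<in> convex hull S" "\<forall>i. r1 * (M *v x1) $ i \<le> y1 $ i" "t1 \<le> r1 * (v \<bullet> x1)"
      and r2: "0 \<le> r2" and x2: "x2 \<in> convex hull S" "\<forall>i. r2 * (M *v x2) $ i \<le> y2 $ i" "t2 \<le> r2 * (v \<bullet> x2)"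
      unfolding Q_def by auto
    show "z + w \<in> Q"
    proof (cases "r1 + r2 = 0")
      case True
      then have "r1 = 0" "r2 = 0" using r1 r2 by auto
      then show ?thesis using x1 x2 unfolding z w Q_def
        by (auto intro!: bexI[of _ x1] simp: add_nonneg_nonneg)
    next
      case False
      then have pos: "0 < r1 + r2" using r1 r2 by auto
      define x where "x = (r1/(r1+r2)) *\<^sub>R x1 + (r2/(r1+r2)) *\<^sub>R x2"
      have "x \<in> convex hull S" unfolding x_def
        apply (rule convexD[OF convex_convex_hull x1(1) x2(1)])
        using pos r1 r2 by (auto simp: add_divide_distrib[symmetric])
      moreover have "(r1 + r2) * (M *v x) $ i = r1 * (M *v x1) $ i + r2 * (M *v x2) $ i" for i
      proof -
        have "(M *v x) $ i = r1/(r1+r2) * (M *v x1) $ i + r2/(r1+r2) * (M *v x2) $ i"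
          by (simp add: x_def matrix_vector_right_distrib matrix_vector_mult_scaleR)
        then show ?thesis using pos by (simp add: distrib_left)
      qed
      moreover have "(r1 + r2) * (v \<bullet> x) = r1 * (v \<bullet> x1) + r2 * (v \<bullet> x2)"
      proof -
        have "v \<bullet> x = r1/(r1+r2) * (v \<bullet> x1) + r2/(r1+r2) * (v \<bullet> x2)"
          by (simp add: x_def inner_add_right)
        then show ?thesis using pos by (simp add: distrib_left)
      qed
      ultimately show ?thesis using x1 x2 r1 r2 unfolding z w Q_def
        by (auto intro!: bexI[of _ x] add_mono)
    qed
  next
    fix z and c :: real assume "z \<in> Q" "0 \<le> c"
    then obtain y t r x where z: "z = (y,t,r)" and r: "0 \<le> r"
      and x: "x \<in> convex hull S" "\<forall>i. r * (M *v x) $ i \<le> y $ i" "t \<le> r * (v \<bullet> x)"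
      unfolding Q_def by auto
    have "\<forall>i. (c * r) * (M *v x) $ i \<le> c * y $ i"
      using x(2) \<open>0 \<le> c\<close> by (simp add: mult.assoc mult_left_mono)
    moreover have "c * t \<le> (c * r) * (v \<bullet> x)"
      using x(3) \<open>0 \<le> c\<close> by (simp add: mult.assoc mult_left_mono)
    ultimately show "c *\<^sub>R z \<in> Q" using x(1) r \<open>0 \<le> c\<close> unfolding z Q_def by auto
  qed
  have GQ: "G \<subseteq> Q" unfolding G_def Q_def
  proof safe
    fix s assume "s \<in> S"
    then show "\<exists>x\<in>convex hull S. (\<forall>i. 1 * (M *v x) $ i \<le> (M *v s) $ i) \<and> v \<bullet> s \<le> 1 * (v \<bullet> x)"
      by (intro bexI[of _ s]) (auto intro: hull_inc)
  next
    fix i show "\<exists>x\<in>convex hull S. (\<forall>j. 0 * (M *v x) $ j \<le> axis i (1::real) $ j) \<and> 0 \<le> 0 * (v \<bullet> x)"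
      using xsS by (auto simp: axis_def)
  qed simp_all
  have KQ: "K \<subseteq> Q" unfolding K_def using GQ ccQ by (rule hull_minimal)
  have notK: "p (opt + e) \<notin> K" if "e > 0" for e
  proof
    assume "p (opt + e) \<in> K"
    with KQ obtain x where x: "x \<in> convex hull S" "\<forall>i. (M *v x) $ i \<le> b $ i" "opt + e \<le> v \<bullet> x"
      unfolding p_def Q_def by auto
    then have "x \<in> convex hull (S \<inter> polyh M b)" using hull unfolding polyh_def by auto
    moreover have "convex hull (S \<inter> polyh M b) \<subseteq> {z. v \<bullet> z \<le> opt}"
      apply (rule hull_minimal)
      using opt unfolding opt_def by (auto simp: convex_halfspace_le)
    ultimately show False using x(3) that by auto
  qed
  obtain F where finF: "finite F" and KF: "K = \<Inter>F"
    and hF: "\<forall>h\<in>F. \<exists>a c. a \<noteq> 0 \<and> h = {x. a \<bullet> x \<le> c}"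
    using polyK unfolding polyhedron_def by blast
  obtain A C where AC: "\<forall>h\<in>F. h = {x. A h \<bullet> x \<le> C h}"
    using hF by metis
  define \<beta> where "\<beta> h = fst (snd (A h))" for h
  have lin: "A h \<bullet> p t = A h \<bullet> p opt + \<beta> h * (t - opt)" for h t
    by (cases "A h") (auto simp: p_def \<beta>_def algebra_simps)
  have inh: "A h \<bullet> p opt \<le> C h" if "h \<in> F" for h
    using pK KF AC that by auto
  have "\<exists>h\<in>F. \<beta> h > 0 \<and> A h \<bullet> p opt = C h"
  proof (rule ccontr)
    assume nex: "\<not> ?thesis"
    define E where "E = (\<lambda>h. (C h - A h \<bullet> p opt) / \<beta> h) ` {h\<in>F. \<beta> h > 0}"
    define e where "e = Min (insert 1 E)"
    have finE: "finite E" unfolding E_def using finF by simp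
    have Epos: "\<forall>u\<in>E. u > 0"
      unfolding E_def using nex inh by (force intro: divide_pos_pos)
    have epos: "e > 0" unfolding e_def using finE Epos by simp
    have "p (opt + e) \<in> K" unfolding KF
    proof
      fix h assume h: "h \<in> F"
      have "A h \<bullet> p (opt + e) \<le> C h"
      proof (cases "\<beta> h > 0")
        case True
        then have "e \<le> (C h - A h \<bullet> p opt) / \<beta> h"
          unfolding e_def E_def using finE h by (intro Min_le) (auto simp: E_def)
        then have "\<beta> h * e \<le> C h - A h \<bullet> p opt" using True by (simp add: field_simps)
        then show ?thesis using lin[of h "opt + e"] by simp
      next
        case False
        then have "\<beta> h * e \<le> 0" using epos by (simp add: mult_nonpos_nonneg)
        then show ?thesis using lin[of h "opt + e"] inh[OF h] by simp
      qed
      then show "p (opt + e) \<in> h" using AC h by auto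
    qed
    then show False using notK epos by blast
  qed
  then obtain h where h: "h \<in> F" "\<beta> h > 0" "A h \<bullet> p opt = C h" by blast
  obtain a1 a2 a3 where Ah: "A h = (a1, a2, a3)" by (cases "A h") auto
  have a2: "a2 = \<beta> h" using Ah \<beta>_def by simp
  have Kh: "z \<in> K \<Longrightarrow> A h \<bullet> z \<le> C h" for z using KF AC h(1) by auto
  have a1neg: "a1 $ i \<le> 0" for i
  proof (rule ccontr)
    assume "\<not> a1 $ i \<le> 0"
    then have ai: "a1 $ i > 0" by simp
    define l where "l = (\<bar>C h\<bar> + 1) / a1 $ i"
    have "l \<ge> 0" unfolding l_def using ai by simp
    moreover have "(axis i 1, 0::real, 0::real) \<in> K" using GK unfolding G_def by auto
    ultimately have "l *\<^sub>R (axis i 1, 0::real, 0::real) \<in> K" using convex_cone_scaleR[OF ccK] by blast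
    then have "A h \<bullet> (l *\<^sub>R (axis i 1, 0::real, 0::real)) \<le> C h" by (rule Kh)
    then have "l * a1 $ i \<le> C h" by (simp add: Ah inner_axis)
    moreover have "l * a1 $ i = \<bar>C h\<bar> + 1" unfolding l_def using ai by simp
    ultimately show False by simp
  qed
  define \<gamma> where "\<gamma> = (- (1 / \<beta> h)) *\<^sub>R a1"
  show ?thesis
  proof (intro exI[of _ \<gamma>] conjI allI ballI)
    fix i show "0 \<le> \<gamma> $ i" unfolding \<gamma>_def using h(2) a1neg[of i]
      by (simp add: divide_nonpos_pos)
  next
    fix y assume "y \<in> S"
    then have "(M *v y, v \<bullet> y, 1) \<in> K" using GK unfolding G_def by auto
    then have "A h \<bullet> (M *v y, v \<bullet> y, 1) \<le> C h" by (rule Kh)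
    then have "a1 \<bullet> (M *v y) + \<beta> h * (v \<bullet> y) + a3 \<le> a1 \<bullet> b + \<beta> h * opt + a3"
      using h(3) by (simp add: Ah a2 p_def)
    then have "(a1 \<bullet> (M *v y)) / \<beta> h + v \<bullet> y \<le> (a1 \<bullet> b) / \<beta> h + opt"
    proof -
      have "(a1 \<bullet> (M *v y) + \<beta> h * (v \<bullet> y)) / \<beta> h \<le> (a1 \<bullet> b + \<beta> h * opt) / \<beta> h"
        using \<open>a1 \<bullet> (M *v y) + \<beta> h * (v \<bullet> y) + a3 \<le> a1 \<bullet> b + \<beta> h * opt + a3\<close> h(2)
        by (intro divide_right_mono) auto
      then show ?thesis using h(2) by (simp add: add_divide_distrib)
    qed
    then show "v \<bullet> y - \<gamma> \<bullet> (M *v y) \<le> v \<bullet> xs - \<gamma> \<bullet> b"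
      unfolding \<gamma>_def opt_def by simp
  qed
qed


theorem proposition9:
  fixes S :: "(real^'n::{finite,linorder}) set"
    and M :: "real^'n::{finite,linorder}^'m::finite" and b :: "real^'m"
  assumes "comonotone S"
    and "\<forall>x\<in>S. \<forall>i. x $ i = 0 \<or> x $ i = 1"
    and "convex hull (S \<inter> polyh M b) = convex hull S \<inter> polyh M b"
  shows "\<forall>v :: real^'n::{finite,linorder}. \<exists>\<gamma> :: real^'m. (\<forall>i. 0 \<le> \<gamma> $ i) \<and>
           (\<forall>xb. xb \<in> argmax_lin v (S \<inter> polyh M b) \<longleftrightarrow>
                 xb \<in> (S \<inter> polyh M b) \<inter> polyh_eq M b \<gamma> \<inter>
                       argmax_lin (v - transpose M *v \<gamma>) S)"
proof (intro allI)
  fix v :: "real^'n::{finite,linorder}"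
  have finS: "finite S" using assms(2) by (rule finite_01)
  let ?A = "S \<inter> polyh M b"
  show "\<exists>\<gamma> :: real^'m. (\<forall>i. 0 \<le> \<gamma> $ i) \<and>
           (\<forall>xb. xb \<in> argmax_lin v ?A \<longleftrightarrow>
                 xb \<in> ?A \<inter> polyh_eq M b \<gamma> \<inter> argmax_lin (v - transpose M *v \<gamma>) S)"
  proof (cases "?A = {}")
    case True
    show ?thesis by (rule exI[of _ 0]) (auto simp: True argmax_lin_def)
  next
    case False
    have finA: "finite ?A" using finS by simp
    define mx where "mx = Max ((\<lambda>y. v \<bullet> y) ` ?A)"
    have "mx \<in> (\<lambda>y. v \<bullet> y) ` ?A" unfolding mx_def using finA False by (intro Max_in) auto
    then obtain xs where xs: "xs \<in> ?A" "v \<bullet> xs = mx" by auto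
    have optx: "\<forall>y\<in>?A. v \<bullet> y \<le> v \<bullet> xs"
      using xs finA unfolding mx_def by auto
    obtain \<gamma> :: "real^'m" where g0: "\<forall>i. 0 \<le> \<gamma> $ i"
      and gd: "\<forall>y\<in>S. v \<bullet> y - \<gamma> \<bullet> (M *v y) \<le> v \<bullet> xs - \<gamma> \<bullet> b"
      using duality[OF finS xs(1) optx assms(3)] by blast
    have w: "(v - transpose M *v \<gamma>) \<bullet> y = v \<bullet> y - \<gamma> \<bullet> (M *v y)" for y
      by (simp add: inner_diff_left dot_lmul_matrix)
    have iv: "\<gamma> \<bullet> z = (\<Sum>i\<in>UNIV. \<gamma> $ i * z $ i)" for z :: "real^'m"
      by (simp add: inner_vec_def)
    have Pb: "\<gamma> \<bullet> (M *v y) \<le> \<gamma> \<bullet> b" if "y \<in> polyh M b" for y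
      unfolding iv using that g0 unfolding polyh_def by (intro sum_mono mult_left_mono) auto
    show ?thesis
    proof (intro exI[of _ \<gamma>] conjI g0 allI iffI)
      fix xb assume xb: "xb \<in> argmax_lin v ?A"
      then have xbA: "xb \<in> ?A" and xbm: "\<forall>y\<in>?A. v \<bullet> y \<le> v \<bullet> xb" unfolding argmax_lin_def by auto
      have eq: "v \<bullet> xb = v \<bullet> xs" using xbm xs(1) optx xbA by (meson antisym)
      have ge: "\<gamma> \<bullet> b \<le> \<gamma> \<bullet> (M *v xb)" using gd xbA eq by force
      have le: "\<gamma> \<bullet> (M *v xb) \<le> \<gamma> \<bullet> b" using Pb xbA by blast
      have "(\<Sum>i\<in>UNIV. \<gamma> $ i * (b $ i - (M *v xb) $ i)) = 0"
        using ge le unfolding iv by (simp add: right_diff_distrib sum_subtractf)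
      moreover have "\<forall>i\<in>UNIV. 0 \<le> \<gamma> $ i * (b $ i - (M *v xb) $ i)"
        using g0 xbA unfolding polyh_def by auto
      ultimately have "\<forall>i\<in>UNIV. \<gamma> $ i * (b $ i - (M *v xb) $ i) = 0"
        using sum_nonneg_eq_0_iff[of UNIV "\<lambda>i. \<gamma> $ i * (b $ i - (M *v xb) $ i)"] by simp
      then have "xb \<in> polyh_eq M b \<gamma>" unfolding polyh_eq_def by auto
      moreover have "xb \<in> argmax_lin (v - transpose M *v \<gamma>) S"
        unfolding argmax_lin_def w using xbA gd eq le ge by force
      ultimately show "xb \<in> ?A \<inter> polyh_eq M b \<gamma> \<inter> argmax_lin (v - transpose M *v \<gamma>) S"
        using xbA by blast
    next
      fix xb assume xb: "xb \<in> ?A \<inter> polyh_eq M b \<gamma> \<inter> argmax_lin (v - transpose M *v \<gamma>) S"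
      then have xbA: "xb \<in> ?A" and pe: "xb \<in> polyh_eq M b \<gamma>"
        and am: "\<forall>y\<in>S. v \<bullet> y - \<gamma> \<bullet> (M *v y) \<le> v \<bullet> xb - \<gamma> \<bullet> (M *v xb)"
        unfolding argmax_lin_def w by auto
      have gi: "\<gamma> $ i * (M *v xb) $ i = \<gamma> $ i * b $ i" for i
        using pe unfolding polyh_eq_def by (cases "\<gamma> $ i = 0") auto
      have geq: "\<gamma> \<bullet> (M *v xb) = \<gamma> \<bullet> b" unfolding iv by (rule sum.cong[OF refl gi])
      have "v \<bullet> y \<le> v \<bullet> xb" if "y \<in> ?A" for y
        using am that Pb[of y] geq by force
      then show "xb \<in> argmax_lin v ?A" using xbA unfolding argmax_lin_def by auto
    qed
  qed
qed

end
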